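(* For every integer $k>4$ there exists a finite simple graph $G$ such that, defining $G_0=G$ and $G_{t+1}=P^k(G_t)$ for $t\ge 0$, we have $G_{t+1}\neq G_t$ for every $t\ge 0$. In other words, iterating $k$-intersection polishing starting from $G$ never reaches a $k$-intersection polished graph.
   Context: All graphs are finite and simple. For a vertex $v$, $N[v]$ denotes its closed neighbourhood (the set of neighbours of $v$ together with $v$). For an integer $k$, $P^k(G)$ is the graph on the same vertex set as $G$ in which two distinct vertices $u,v$ are adjacent if and only if $|N[u]\cap N[v]|\ge k$, the closed neighbourhoods being taken in $G$. A graph $G$ is called $k$-intersection polished if $P^k(G)=G$ (equality of edge sets on the same vertex set). *)

theory Defs
  imports Main
begin

definition simple_graph :: "'a set \<Rightarrow> 'a set set \<Rightarrow> bool" where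
  "simple_graph V E \<longleftrightarrow> finite V \<and> (\<forall>e\<in>E. e \<subseteq> V \<and> card e = 2)"

definition closed_nbhd :: "'a set set \<Rightarrow> 'a \<Rightarrow> 'a set" where
  "closed_nbhd E v = insert v {u. {u, v} \<in> E}"

definition polish :: "nat \<Rightarrow> 'a set \<Rightarrow> 'a set set \<Rightarrow> 'a set set" where
  "polish k V E = {{u, v} | u v. u \<in> V \<and> v \<in> V \<and> u \<noteq> v \<and>
                      card (closed_nbhd E u \<inter> closed_nbhd E v) \<ge> k}"

end

theory Submission
  imports Defs
begin

definition dm :: "nat \<Rightarrow> nat \<Rightarrow> nat" where "dm u v = (u mod 9 + 9 - v mod 9) mod 9"

definition cntR :: "nat set \<Rightarrow> nat \<Rightarrow> nat \<Rightarrow> nat set" where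
  "cntR D a b = {c. c < 9 \<and> dm a c \<in> D \<and> dm b c \<in> D}"

definition GG :: "nat \<Rightarrow> nat set \<Rightarrow> nat set set" where
  "GG m D = {{u,v} | u v. u < 9*m \<and> v < 9*m \<and> u \<noteq> v \<and> dm u v \<in> D}"

definition symD :: "nat set \<Rightarrow> bool" where
  "symD D \<longleftrightarrow> (\<forall>a\<in>set [0..<9]. \<forall>b\<in>set [0..<9]. (dm a b \<in> D) = (dm b a \<in> D))"

definition chkD :: "nat set \<Rightarrow> nat set \<Rightarrow> bool" where
  "chkD D D' \<longleftrightarrow> (\<forall>a\<in>set [0..<9]. \<forall>b\<in>set [0..<9].
     (3 \<le> length (filter (\<lambda>c. dm a c \<in> D \<and> dm b c \<in> D) [0..<9])) = (dm a b \<in> D'))"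

abbreviation "D0 \<equiv> {0,1,3,6,8::nat}"
abbreviation "D1 \<equiv> {0,2,3,6,7::nat}"
abbreviation "D2 \<equiv> {0,3,4,5,6::nat}"

lemma sym0: "symD D0" unfolding symD_def dm_def by code_simp
lemma sym1: "symD D1" unfolding symD_def dm_def by code_simp
lemma sym2: "symD D2" unfolding symD_def dm_def by code_simp
lemma chk01: "chkD D0 D1" unfolding chkD_def dm_def by code_simp
lemma chk12: "chkD D1 D2" unfolding chkD_def dm_def by code_simp
lemma chk20: "chkD D2 D0" unfolding chkD_def dm_def by code_simp

lemma set_filter_upt: "{c. c < n \<and> P c} = set (filter P [0..<n])" by auto
lemma card_filt: "card {c. c < n \<and> P c} = length (filter P [0..<n])"
  by (simp only: set_filter_upt distinct_card distinct_filter distinct_upt)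

lemma dm_mod: "dm u v = dm (u mod 9) (v mod 9)" by (simp add: dm_def)

lemma symD_app: "symD D \<Longrightarrow> (dm u v \<in> D) = (dm v u \<in> D)"
  unfolding symD_def by (subst (1 2) dm_mod) auto

lemma mem_GG: assumes "symD D"
  shows "{x,y} \<in> GG m D \<longleftrightarrow> x < 9*m \<and> y < 9*m \<and> x \<noteq> y \<and> dm x y \<in> D"
  unfolding GG_def using symD_app[OF assms] by (auto simp: doubleton_eq_iff)

lemma nbhd_GG: assumes "symD D" "0 \<in> D" "u < 9*m"
  shows "closed_nbhd (GG m D) u = {w. w < 9*m \<and> dm u w \<in> D}"
  unfolding closed_nbhd_def using assms symD_app[OF assms(1), of u] mem_GG[OF assms(1)]
  by (auto simp: dm_def)

lemma card_res: assumes "R \<subseteq> {..<9}"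
  shows "card {w. w < 9*m \<and> w mod 9 \<in> R} = card R * m"
proof -
  have eq: "{w. w < 9*m \<and> w mod 9 \<in> R} = (\<lambda>(a,i). a + 9*i) ` (R \<times> {..<m})"
  proof
    show "{w. w < 9*m \<and> w mod 9 \<in> R} \<subseteq> (\<lambda>(a,i). a + 9*i) ` (R \<times> {..<m})"
    proof
      fix w assume w: "w \<in> {w. w < 9*m \<and> w mod 9 \<in> R}"
      have "w = w mod 9 + 9 * (w div 9)" by simp
      moreover have "w div 9 < m" using w by auto
      ultimately show "w \<in> (\<lambda>(a,i). a + 9*i) ` (R \<times> {..<m})" using w
        by (intro image_eqI[of _ _ "(w mod 9, w div 9)"]) auto
    qed
  next
    show "(\<lambda>(a,i). a + 9*i) ` (R \<times> {..<m}) \<subseteq> {w. w < 9*m \<and> w mod 9 \<in> R}"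
    proof clarify
      fix a i assume "a \<in> R" "i < m"
      then have "a < 9" using assms by auto
      then show "a + 9*i < 9*m \<and> (a + 9*i) mod 9 \<in> R" using \<open>a \<in> R\<close> \<open>i < m\<close> by auto
    qed
  qed
  have inj: "inj_on (\<lambda>(a,i). a + 9*i) (R \<times> {..<m})"
  proof (rule inj_onI, clarify)
    fix a i b j assume h: "a \<in> R" "b \<in> R" "a + 9*i = b + 9*(j::nat)"
    then have "a < 9" "b < 9" using assms by auto
    then have "(a + 9*i) mod 9 = a" "(b + 9*j) mod 9 = b" by auto
    then have "a = b" using h by metis
    then show "a = b \<and> i = j" using h by auto
  qed
  have fin: "finite R" using assms finite_subset by blast
  show ?thesis unfolding eq using card_image[OF inj] fin by (simp add: card_cartesian_product)
qed

lemma thr: fixes x m k :: nat assumes km: "2*m < k" "k \<le> 3*m"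
  shows "(k \<le> x * m) = (3 \<le> x)"
proof
  assume h: "k \<le> x * m"
  show "3 \<le> x"
  proof (rule ccontr)
    assume "\<not> 3 \<le> x" then have "x \<le> 2" by simp
    then have "x * m \<le> 2 * m" by (rule mult_right_mono) simp
    then show False using h km(1) by linarith
  qed
next
  assume "3 \<le> x"
  then have "3 * m \<le> x * m" by (rule mult_right_mono) simp
  then show "k \<le> x * m" using km(2) by linarith
qed

lemma dm_mod2: "dm (a mod 9) (b mod 9) = dm a b" by (simp add: dm_def)

lemma mem_cntR: "(w mod 9 \<in> cntR D (u mod 9) (v mod 9)) = (dm u w \<in> D \<and> dm v w \<in> D)"
  unfolding cntR_def by (simp add: dm_mod2)

lemma cong4:
  assumes "\<And>u v. a u \<Longrightarrow> b v \<Longrightarrow> B u v = C u v"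
  shows "{{u,v}|u v. a u \<and> b v \<and> c u v \<and> B u v} = {{u,v}|u v. a u \<and> b v \<and> c u v \<and> C u v}"
  using assms by blast

lemma polish_GG:
  assumes s: "symD D" "symD D'" and z: "0 \<in> D" and c: "chkD D D'"
    and km: "2*m < k" "k \<le> 3*m"
  shows "polish k {..<9*m} (GG m D) = GG m D'"
proof -
  have key: "(k \<le> card (closed_nbhd (GG m D) u \<inter> closed_nbhd (GG m D) v)) = (dm u v \<in> D')"
    if uv: "u < 9*m" "v < 9*m" for u v
  proof -
    have "closed_nbhd (GG m D) u \<inter> closed_nbhd (GG m D) v
        = {w. w < 9*m \<and> w mod 9 \<in> cntR D (u mod 9) (v mod 9)}"
      unfolding nbhd_GG[OF s(1) z uv(1)] nbhd_GG[OF s(1) z uv(2)] mem_cntR by blast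
    moreover have "cntR D (u mod 9) (v mod 9) \<subseteq> {..<9}" by (auto simp: cntR_def)
    ultimately have cd: "card (closed_nbhd (GG m D) u \<inter> closed_nbhd (GG m D) v)
        = card (cntR D (u mod 9) (v mod 9)) * m" using card_res by simp
    have l: "card (cntR D (u mod 9) (v mod 9))
        = length (filter (\<lambda>c. dm (u mod 9) c \<in> D \<and> dm (v mod 9) c \<in> D) [0..<9])"
      unfolding cntR_def by (rule card_filt)
    have "u mod 9 \<in> set [0..<9]" "v mod 9 \<in> set [0..<9]" by auto
    then have "(3 \<le> length (filter (\<lambda>c. dm (u mod 9) c \<in> D \<and> dm (v mod 9) c \<in> D) [0..<9]))
       = (dm (u mod 9) (v mod 9) \<in> D')"
      using c unfolding chkD_def by blast
    then have e: "(3 \<le> card (cntR D (u mod 9) (v mod 9))) = (dm u v \<in> D')"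
      unfolding l dm_mod2 .
    have "(k \<le> card (cntR D (u mod 9) (v mod 9)) * m) = (3 \<le> card (cntR D (u mod 9) (v mod 9)))"
      by (rule thr[OF km])
    then show ?thesis using cd e by simp
  qed
  have "polish k {..<9*m} (GG m D) = {{u,v} | u v. u < 9*m \<and> v < 9*m \<and> u \<noteq> v \<and>
        k \<le> card (closed_nbhd (GG m D) u \<inter> closed_nbhd (GG m D) v)}"
    unfolding polish_def by simp
  also have "\<dots> = GG m D'"
    unfolding GG_def[of m D'] by (rule cong4) (rule key)
  finally show ?thesis .
qed

definition Dt :: "nat \<Rightarrow> nat set" where
  "Dt t = (if t mod 3 = 0 then D0 else if t mod 3 = 1 then D1 else D2)"

lemma symDt: "symD (Dt t)" using sym0 sym1 sym2 by (simp add: Dt_def)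

lemma iter_GG:
  assumes km: "2*m < k" "k \<le> 3*m"
  shows "(polish k {..<9*m} ^^ t) (GG m D0) = GG m (Dt t)"
proof (induction t)
  case 0 then show ?case by (simp add: Dt_def)
next
  case (Suc t)
  have "(polish k {..<9*m} ^^ Suc t) (GG m D0) = polish k {..<9*m} (GG m (Dt t))"
    using Suc by simp
  also have "\<dots> = GG m (Dt (Suc t))"
  proof -
    consider "t mod 3 = 0" | "t mod 3 = 1" | "t mod 3 = 2" by arith
    then show ?thesis
    proof cases
      case 1
      then have "Dt t = D0" "Dt (Suc t) = D1" by (auto simp: Dt_def mod_Suc)
      then show ?thesis using polish_GG[OF sym0 sym1 _ chk01 km] by simp
    next
      case 2
      then have "Dt t = D1" "Dt (Suc t) = D2" by (auto simp: Dt_def mod_Suc)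
      then show ?thesis using polish_GG[OF sym1 sym2 _ chk12 km] by simp
    next
      case 3
      then have "Dt t = D2" "Dt (Suc t) = D0" by (auto simp: Dt_def mod_Suc)
      then show ?thesis using polish_GG[OF sym2 sym0 _ chk20 km] by simp
    qed
  qed
  finally show ?case .
qed

lemma dm01: "dm 0 1 = 8" by (simp add: dm_def)
lemma dm02: "dm 0 2 = 7" by (simp add: dm_def)

lemma GG_distinct:
  assumes "m \<ge> 1"
  shows "GG m D0 \<noteq> GG m D1" "GG m D1 \<noteq> GG m D2" "GG m D2 \<noteq> GG m D0"
proof -
  have l: "(1::nat) < 9*m" "(2::nat) < 9*m" "(0::nat) < 9*m" using assms by auto
  have a: "{0,1} \<in> GG m D0" using mem_GG[OF sym0] l dm01 by simp
  have b: "{0,1} \<notin> GG m D1" using mem_GG[OF sym1] dm01 by simp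
  have b2: "{0,1} \<notin> GG m D2" using mem_GG[OF sym2] dm01 by simp
  have c: "{0,2} \<in> GG m D1" using mem_GG[OF sym1] l dm02 by simp
  have d: "{0,2} \<notin> GG m D2" using mem_GG[OF sym2] dm02 by simp
  show "GG m D0 \<noteq> GG m D1" using a b by auto
  show "GG m D1 \<noteq> GG m D2" using c d by auto
  show "GG m D2 \<noteq> GG m D0" using a b2 by auto
qed

lemma GG_simple: "simple_graph {..<9*m} (GG m D)"
  unfolding simple_graph_def GG_def by auto

theorem theorem2:
  fixes k :: nat
  assumes "k > 4"
  shows "\<exists>(V :: nat set) E. simple_graph V E \<and>
           (\<forall>t. (polish k V ^^ Suc t) E \<noteq> (polish k V ^^ t) E)"
proof -
  define m where "m = (k + 2) div 3"
  have km: "2*m < k" "k \<le> 3*m" using assms unfolding m_def by arith+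
  have m1: "m \<ge> 1" using km by simp
  show ?thesis
  proof (intro exI conjI allI)
    show "simple_graph {..<9*m} (GG m D0)" by (rule GG_simple)
    fix t
    show "(polish k {..<9*m} ^^ Suc t) (GG m D0) \<noteq> (polish k {..<9*m} ^^ t) (GG m D0)"
      unfolding iter_GG[OF km]
    proof -
      consider "t mod 3 = 0" | "t mod 3 = 1" | "t mod 3 = 2" by arith
      then show "GG m (Dt (Suc t)) \<noteq> GG m (Dt t)"
      proof cases
        case 1
        then have "Dt t = D0" "Dt (Suc t) = D1" by (auto simp: Dt_def mod_Suc)
        then show ?thesis using GG_distinct(1)[OF m1] by metis
      next
        case 2
        then have "Dt t = D1" "Dt (Suc t) = D2" by (auto simp: Dt_def mod_Suc)
        then show ?thesis using GG_distinct(2)[OF m1] by metis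
      next
        case 3
        then have "Dt t = D2" "Dt (Suc t) = D0" by (auto simp: Dt_def mod_Suc)
        then show ?thesis using GG_distinct(3)[OF m1] by metis
      qed
    qed
  qed
qed

end
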